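(* The forgetful functor $\Phi:\mathrm{OS}_B^{\mathrm{op}}\to\mathrm{FS}_B^{\mathrm{op}}$ has property (F).
   Context: $\mathrm{FS}_B$: objects $(E,\sigma)$ with $E$ a finite set and $\sigma$ an involution with a unique fixed point; morphisms are surjective equivariant maps. $\mathrm{OS}_B$: objects $(E,\sigma)$ with $E$ totally ordered finite, $\sigma$ an order-reversing involution with unique fixed point $0$; with $-e:=\sigma(e)$, $E^+=\{e>0\}$, $|e|=\max\{\pm e\}$, $\mathrm{init}\,D=\min\{|e|:e\in D\}$, the morphisms $(E_1,\sigma_1)\to(E_2,\sigma_2)$ are surjective equivariant maps $\varphi$ with (i) $\mathrm{init}\,\varphi^{-1}(e)\in\varphi^{-1}(e)$ for all $e\in E_2^+$ and (ii) $\mathrm{init}\,\varphi^{-1}(e)<\mathrm{init}\,\varphi^{-1}(f)$ for all $e<f$ in $E_2^+$. A functor $\Phi:\mathcal C\to\mathcal C'$ has property (F) if for every object $x$ of $\mathcal C'$ there are finitely many objects $y_1,\dots,y_s$ of $\mathcal C$ and morphisms $\varphi_i:x\to\Phi(y_i)$ such that for every object $y$ of $\mathcal C$ and morphism $\varphi:x\to\Phi(y)$ there are $i$ and a morphism $\psi:y_i\to y$ in $\mathcal C$ with $\varphi=\Phi(\psi)\circ\varphi_i$. *)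

theory Defs
  imports Main
begin

definition fsb_obj :: "'a set \<Rightarrow> ('a \<Rightarrow> 'a) \<Rightarrow> bool" where
  "fsb_obj E \<sigma> \<longleftrightarrow> finite E \<and> (\<forall>e\<in>E. \<sigma> e \<in> E \<and> \<sigma> (\<sigma> e) = e)
     \<and> (\<exists>!z. z \<in> E \<and> \<sigma> z = z)"

definition fsb_mor :: "'a set \<Rightarrow> ('a \<Rightarrow> 'a) \<Rightarrow> 'b set \<Rightarrow> ('b \<Rightarrow> 'b) \<Rightarrow> ('a \<Rightarrow> 'b) \<Rightarrow> bool" where
  "fsb_mor E1 \<sigma>1 E2 \<sigma>2 \<phi> \<longleftrightarrow> \<phi> ` E1 = E2 \<and> (\<forall>e\<in>E1. \<phi> (\<sigma>1 e) = \<sigma>2 (\<phi> e))"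

definition osb_obj :: "'a set \<Rightarrow> ('a \<Rightarrow> 'a \<Rightarrow> bool) \<Rightarrow> ('a \<Rightarrow> 'a) \<Rightarrow> bool" where
  "osb_obj E le \<sigma> \<longleftrightarrow> finite E
     \<and> (\<forall>x\<in>E. le x x)
     \<and> (\<forall>x\<in>E. \<forall>y\<in>E. le x y \<and> le y x \<longrightarrow> x = y)
     \<and> (\<forall>x\<in>E. \<forall>y\<in>E. \<forall>z\<in>E. le x y \<and> le y z \<longrightarrow> le x z)
     \<and> (\<forall>x\<in>E. \<forall>y\<in>E. le x y \<or> le y x)
     \<and> (\<forall>e\<in>E. \<sigma> e \<in> E \<and> \<sigma> (\<sigma> e) = e)
     \<and> (\<forall>e\<in>E. \<forall>f\<in>E. le e f \<longrightarrow> le (\<sigma> f) (\<sigma> e))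
     \<and> (\<exists>!z. z \<in> E \<and> \<sigma> z = z)"

definition os_zero :: "'a set \<Rightarrow> ('a \<Rightarrow> 'a) \<Rightarrow> 'a" where
  "os_zero E \<sigma> = (THE z. z \<in> E \<and> \<sigma> z = z)"

definition os_lt :: "('a \<Rightarrow> 'a \<Rightarrow> bool) \<Rightarrow> 'a \<Rightarrow> 'a \<Rightarrow> bool" where
  "os_lt le x y \<longleftrightarrow> le x y \<and> x \<noteq> y"

definition os_pos :: "'a set \<Rightarrow> ('a \<Rightarrow> 'a \<Rightarrow> bool) \<Rightarrow> ('a \<Rightarrow> 'a) \<Rightarrow> 'a set" where
  "os_pos E le \<sigma> = {e \<in> E. os_lt le (os_zero E \<sigma>) e}"

definition os_abs :: "('a \<Rightarrow> 'a \<Rightarrow> bool) \<Rightarrow> ('a \<Rightarrow> 'a) \<Rightarrow> 'a \<Rightarrow> 'a" where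
  "os_abs le \<sigma> e = (if le (\<sigma> e) e then e else \<sigma> e)"

definition os_init :: "('a \<Rightarrow> 'a \<Rightarrow> bool) \<Rightarrow> ('a \<Rightarrow> 'a) \<Rightarrow> 'a set \<Rightarrow> 'a" where
  "os_init le \<sigma> D = (THE m. m \<in> os_abs le \<sigma> ` D \<and> (\<forall>d\<in>D. le m (os_abs le \<sigma> d)))"

definition osb_mor :: "'a set \<Rightarrow> ('a \<Rightarrow> 'a \<Rightarrow> bool) \<Rightarrow> ('a \<Rightarrow> 'a)
     \<Rightarrow> 'b set \<Rightarrow> ('b \<Rightarrow> 'b \<Rightarrow> bool) \<Rightarrow> ('b \<Rightarrow> 'b) \<Rightarrow> ('a \<Rightarrow> 'b) \<Rightarrow> bool" where
  "osb_mor E1 le1 \<sigma>1 E2 le2 \<sigma>2 \<phi> \<longleftrightarrow> fsb_mor E1 \<sigma>1 E2 \<sigma>2 \<phi>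
     \<and> (\<forall>e\<in>os_pos E2 le2 \<sigma>2.
          os_init le1 \<sigma>1 {x \<in> E1. \<phi> x = e} \<in> {x \<in> E1. \<phi> x = e})
     \<and> (\<forall>e\<in>os_pos E2 le2 \<sigma>2. \<forall>f\<in>os_pos E2 le2 \<sigma>2. os_lt le2 e f \<longrightarrow>
          os_lt le1 (os_init le1 \<sigma>1 {x \<in> E1. \<phi> x = e}) (os_init le1 \<sigma>1 {x \<in> E1. \<phi> x = f}))"

end

theory Submission
  imports Defs
begin

locale ose =
  fixes E :: "'b set" and le :: "'b \<Rightarrow> 'b \<Rightarrow> bool" and \<sigma> :: "'b \<Rightarrow> 'b"
  assumes obj: "osb_obj E le \<sigma>"
begin

lemma fin: "finite E" using obj by (simp add: osb_obj_def)
lemma refl: "x \<in> E \<Longrightarrow> le x x" using obj by (simp add: osb_obj_def)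
lemma antisym: "x \<in> E \<Longrightarrow> y \<in> E \<Longrightarrow> le x y \<Longrightarrow> le y x \<Longrightarrow> x = y"
  using obj unfolding osb_obj_def by blast
lemma trans: "x \<in> E \<Longrightarrow> y \<in> E \<Longrightarrow> z \<in> E \<Longrightarrow> le x y \<Longrightarrow> le y z \<Longrightarrow> le x z"
  using obj unfolding osb_obj_def by blast
lemma total: "x \<in> E \<Longrightarrow> y \<in> E \<Longrightarrow> le x y \<or> le y x"
  using obj unfolding osb_obj_def by blast
lemma sig_in: "x \<in> E \<Longrightarrow> \<sigma> x \<in> E" using obj unfolding osb_obj_def by blast
lemma sig_inv: "x \<in> E \<Longrightarrow> \<sigma> (\<sigma> x) = x" using obj unfolding osb_obj_def by blast
lemma rev: "x \<in> E \<Longrightarrow> y \<in> E \<Longrightarrow> le x y \<Longrightarrow> le (\<sigma> y) (\<sigma> x)"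
  using obj unfolding osb_obj_def by blast
lemma ex1z: "\<exists>!z. z \<in> E \<and> \<sigma> z = z" using obj unfolding osb_obj_def by (elim conjE) assumption

abbreviation "z \<equiv> os_zero E \<sigma>"
lemma z: "z \<in> E" "\<sigma> z = z"
  using theI'[OF ex1z] unfolding os_zero_def by auto
lemma z_uniq: "x \<in> E \<Longrightarrow> \<sigma> x = x \<Longrightarrow> x = z"
  using ex1z z by blast

abbreviation "ab \<equiv> os_abs le \<sigma>"
lemma abs_cases: "ab x = x \<or> ab x = \<sigma> x" by (simp add: os_abs_def)
lemma abs_in: "x \<in> E \<Longrightarrow> ab x \<in> E" using abs_cases sig_in by metis
lemma abs_sig: assumes "x \<in> E" shows "ab (\<sigma> x) = ab x"
proof -
  have s: "\<sigma> (\<sigma> x) = x" using sig_inv assms by simp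
  have a: "le x (\<sigma> x) \<Longrightarrow> le (\<sigma> x) x \<Longrightarrow> \<sigma> x = x" using antisym assms sig_in by blast
  have t: "le x (\<sigma> x) \<or> le (\<sigma> x) x" using total assms sig_in by blast
  show ?thesis using a t by (auto simp: os_abs_def s)
qed
lemma z_or: "x \<in> E \<Longrightarrow> le z x \<or> le x z" using total z by blast
lemma neg_pos: "x \<in> E \<Longrightarrow> le x z \<Longrightarrow> le z (\<sigma> x)" using rev z by metis
lemma z_le_abs: assumes "x \<in> E" shows "le z (ab x)"
proof (cases "le (\<sigma> x) x")
  case True
  then show ?thesis using assms z_or[OF assms] neg_pos[OF assms] trans[OF z(1) sig_in[OF assms] assms]
    by (auto simp: os_abs_def)
next
  case False
  then have "le x (\<sigma> x)" using total assms sig_in by blast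
  then show ?thesis using False assms z_or[OF assms] neg_pos[OF assms] trans[OF z(1) assms sig_in[OF assms]]
    by (auto simp: os_abs_def)
qed

lemma min_ex: "finite B \<Longrightarrow> B \<noteq> {} \<Longrightarrow> B \<subseteq> E \<Longrightarrow> \<exists>m\<in>B. \<forall>b\<in>B. le m b"
proof (induction B rule: finite_ne_induct)
  case (singleton x) then show ?case using refl by auto
next
  case (insert x B)
  then obtain m where m: "m \<in> B" "\<forall>b\<in>B. le m b" by auto
  show ?case
  proof (cases "le x m")
    case True
    then show ?thesis using insert m refl trans[of x m] by (auto) (metis subsetD)
  next
    case False
    then have "le m x" using total insert m by blast
    then show ?thesis using m by auto
  qed
qed

lemma init: assumes "finite D" "D \<noteq> {}" "D \<subseteq> E"
  shows "os_init le \<sigma> D \<in> ab ` D \<and> (\<forall>d\<in>D. le (os_init le \<sigma> D) (ab d))"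
proof -
  have "ab ` D \<subseteq> E" using assms abs_in by auto
  then obtain m where m: "m \<in> ab ` D" "\<forall>b\<in>ab ` D. le m b" using min_ex assms by (metis finite_imageI image_is_empty)
  have "\<exists>!m. m \<in> ab ` D \<and> (\<forall>d\<in>D. le m (ab d))"
  proof
    show "m \<in> ab ` D \<and> (\<forall>d\<in>D. le m (ab d))" using m by auto
  next
    fix m' assume "m' \<in> ab ` D \<and> (\<forall>d\<in>D. le m' (ab d))"
    then show "m' = m" using m antisym \<open>ab ` D \<subseteq> E\<close> by blast
  qed
  then show ?thesis unfolding os_init_def by (rule theI')
qed

lemma init_sig: assumes "D \<subseteq> E" shows "os_init le \<sigma> (\<sigma> ` D) = os_init le \<sigma> D"
proof -
  have "ab ` \<sigma> ` D = ab ` D" using assms abs_sig by (force simp: image_image)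
  moreover have "\<And>m. (\<forall>d\<in>\<sigma> ` D. le m (ab d)) = (\<forall>d\<in>D. le m (ab d))"
    using assms abs_sig by (auto simp: subset_iff)
  ultimately show ?thesis unfolding os_init_def by simp
qed

end

locale core = ose E le \<sigma> for E :: "'b set" and le \<sigma> +
  fixes Y :: "'c set" and \<sigma>' :: "'c \<Rightarrow> 'c" and \<psi> :: "'b \<Rightarrow> 'c"
  assumes Yobj: "fsb_obj Y \<sigma>'" and mor: "fsb_mor E \<sigma> Y \<sigma>' \<psi>"
begin

lemma Yfin: "finite Y" using Yobj by (simp add: fsb_obj_def)
lemma sY_in: "y \<in> Y \<Longrightarrow> \<sigma>' y \<in> Y" using Yobj by (simp add: fsb_obj_def)
lemma sY_inv: "y \<in> Y \<Longrightarrow> \<sigma>' (\<sigma>' y) = y" using Yobj by (simp add: fsb_obj_def)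
lemma ex1zY: "\<exists>!z. z \<in> Y \<and> \<sigma>' z = z" using Yobj unfolding fsb_obj_def by (elim conjE) assumption
lemma surj: "\<psi> ` E = Y" using mor by (simp add: fsb_mor_def)
lemma eqv: "x \<in> E \<Longrightarrow> \<psi> (\<sigma> x) = \<sigma>' (\<psi> x)" using mor by (simp add: fsb_mor_def)
lemma psi_in: "x \<in> E \<Longrightarrow> \<psi> x \<in> Y" using surj by auto

abbreviation "zY \<equiv> os_zero Y \<sigma>'"
lemma zY: "zY \<in> Y" "\<sigma>' zY = zY"
  using theI'[OF ex1zY] unfolding os_zero_def by auto
lemma zY_uniq: "y \<in> Y \<Longrightarrow> \<sigma>' y = y \<Longrightarrow> y = zY"
  using ex1zY zY by blast
lemma psi_z: "\<psi> z = zY"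
  using zY_uniq[OF psi_in[OF z(1)]] eqv[OF z(1)] z by simp

definition "A y = {x \<in> E. \<psi> x = y}"
lemma A_sub: "A y \<subseteq> E" by (auto simp: A_def)
lemma A_fin: "finite (A y)" using fin A_sub finite_subset by blast
lemma A_ne: "y \<in> Y \<Longrightarrow> A y \<noteq> {}" using surj by (auto simp: A_def)
lemma A_sig: assumes "y \<in> Y" shows "\<sigma> ` A y = A (\<sigma>' y)"
proof
  show "\<sigma> ` A y \<subseteq> A (\<sigma>' y)" using eqv sig_in by (auto simp: A_def)
  show "A (\<sigma>' y) \<subseteq> \<sigma> ` A y"
  proof
    fix x assume x: "x \<in> A (\<sigma>' y)"
    then have "x \<in> E" "\<psi> x = \<sigma>' y" by (auto simp: A_def)
    then have "\<sigma> x \<in> A y" using eqv sig_in sY_inv assms by (auto simp: A_def)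
    moreover have "x = \<sigma> (\<sigma> x)" using sig_inv \<open>x \<in> E\<close> by simp
    ultimately show "x \<in> \<sigma> ` A y" by blast
  qed
qed

definition "c y = os_init le \<sigma> (A y)"
definition "g y = (if c y \<in> A y then c y else \<sigma> (c y))"

lemma c_prop: assumes "y \<in> Y" shows "c y \<in> ab ` A y \<and> (\<forall>d\<in>A y. le (c y) (ab d))"
  unfolding c_def by (rule init[OF A_fin A_ne[OF assms] A_sub])
lemma c_in: assumes "y \<in> Y" shows "c y \<in> E"
proof -
  from c_prop[OF assms] obtain d where "d \<in> A y" "c y = ab d" by blast
  then show ?thesis using abs_in A_sub by (metis subsetD)
qed
lemma c_nonneg: assumes "y \<in> Y" shows "le z (c y)"
proof -
  from c_prop[OF assms] obtain d where "d \<in> A y" "c y = ab d" by blast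
  then show ?thesis using z_le_abs A_sub by (metis subsetD)
qed

lemma g_in: assumes "y \<in> Y" shows "g y \<in> A y"
proof -
  obtain d where d: "d \<in> A y" "c y = ab d" using c_prop[OF assms] by blast
  then have "d \<in> E" using A_sub by blast
  show ?thesis
  proof (cases "c y \<in> A y")
    case True then show ?thesis by (simp add: g_def)
  next
    case False
    then have "c y = \<sigma> d" using d abs_cases by metis
    then show ?thesis using False d sig_inv \<open>d \<in> E\<close> by (simp add: g_def)
  qed
qed
lemma g_E: "y \<in> Y \<Longrightarrow> g y \<in> E" using g_in A_sub by blast
lemma psi_g: "y \<in> Y \<Longrightarrow> \<psi> (g y) = y" using g_in by (auto simp: A_def)

lemma c_sig: "y \<in> Y \<Longrightarrow> c (\<sigma>' y) = c y"
  unfolding c_def using A_sig[symmetric] init_sig A_sub by metis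

lemma g_sig: assumes y: "y \<in> Y" shows "g (\<sigma>' y) = \<sigma> (g y)"
proof (cases "\<sigma>' y = y")
  case True
  then have "g y \<in> E" "\<psi> (g y) = y" using g_E psi_g y by auto
  then have "\<psi> (\<sigma> (g y)) = y" using eqv True by simp
  have "c y = z"
  proof -
    have "z \<in> A y" using psi_z zY_uniq[OF y True] z by (simp add: A_def)
    then have "le (c y) (ab z)" using c_prop y by blast
    moreover have "ab z = z" using abs_cases z by metis
    ultimately show ?thesis using c_nonneg y antisym c_in z by metis
  qed
  then show ?thesis using True z by (simp add: g_def)
next
  case False
  have disj: "\<And>x. x \<in> A y \<Longrightarrow> x \<in> A (\<sigma>' y) \<Longrightarrow> False" using False by (auto simp: A_def)
  obtain d where d: "d \<in> A y" "c y = ab d" using c_prop[OF y] by blast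
  have dE: "d \<in> E" using d A_sub by blast
  have sd: "\<sigma> d \<in> A (\<sigma>' y)" using A_sig[OF y] d by blast
  have cs: "c (\<sigma>' y) = c y" using c_sig y by simp
  show ?thesis
  proof (cases "c y \<in> A y")
    case True
    then have "c y \<notin> A (\<sigma>' y)" using disj by blast
    then show ?thesis using True cs by (simp add: g_def)
  next
    case False
    then have "c y = \<sigma> d" using d abs_cases by metis
    then have "c y \<in> A (\<sigma>' y)" using sd by simp
    then show ?thesis using False cs c_in y sig_inv by (simp add: g_def)
  qed
qed

lemma g_zY: "g zY = z"
proof -
  have "g zY \<in> E" "\<sigma> (g zY) = g zY" using g_E g_sig zY by metis+
  then show ?thesis using z_uniq by blast
qed

definition "le' x y = (x \<in> Y \<and> y \<in> Y \<and> le (g x) (g y))"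

lemma obj': "osb_obj Y le' \<sigma>'"
  unfolding osb_obj_def
proof (intro conjI)
  show "finite Y" by (rule Yfin)
  show "\<forall>x\<in>Y. le' x x" using refl g_E by (simp add: le'_def)
  show "\<forall>x\<in>Y. \<forall>y\<in>Y. le' x y \<and> le' y x \<longrightarrow> x = y"
    using antisym g_E psi_g unfolding le'_def by metis
  show "\<forall>x\<in>Y. \<forall>y\<in>Y. \<forall>za\<in>Y. le' x y \<and> le' y za \<longrightarrow> le' x za"
    using trans g_E unfolding le'_def by blast
  show "\<forall>x\<in>Y. \<forall>y\<in>Y. le' x y \<or> le' y x"
    using total g_E unfolding le'_def by blast
  show "\<forall>e\<in>Y. \<sigma>' e \<in> Y \<and> \<sigma>' (\<sigma>' e) = e" using sY_in sY_inv by blast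
  show "\<forall>e\<in>Y. \<forall>f\<in>Y. le' e f \<longrightarrow> le' (\<sigma>' f) (\<sigma>' e)"
    using rev g_E g_sig sY_in unfolding le'_def by simp
  show "\<exists>!z. z \<in> Y \<and> \<sigma>' z = z" by (rule ex1zY)
qed

lemma pos_init: assumes "y \<in> os_pos Y le' \<sigma>'"
  shows "os_init le \<sigma> (A y) = g y"
proof -
  have y: "y \<in> Y" and lz: "le z (g y)" and ne: "y \<noteq> zY"
    using assms g_zY by (auto simp: os_pos_def os_lt_def le'_def)
  have "c y \<in> A y"
  proof (rule ccontr)
    assume "c y \<notin> A y"
    then have gy: "g y = \<sigma> (c y)" by (simp add: g_def)
    have "le (\<sigma> (c y)) (\<sigma> z)" using rev c_nonneg y c_in z by metis
    then have "g y = z" using gy lz z antisym g_E y by metis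
    then have "y = zY" using psi_g y psi_z by metis
    then show False using ne by simp
  qed
  then show ?thesis by (simp add: g_def c_def)
qed

lemma mor': "osb_mor E le \<sigma> Y le' \<sigma>' \<psi>"
  unfolding osb_mor_def
proof (intro conjI ballI impI)
  show "fsb_mor E \<sigma> Y \<sigma>' \<psi>" by (rule mor)
  fix e assume e: "e \<in> os_pos Y le' \<sigma>'"
  then show "os_init le \<sigma> {x \<in> E. \<psi> x = e} \<in> {x \<in> E. \<psi> x = e}"
    using pos_init g_in by (auto simp: A_def os_pos_def)
  fix f assume f: "f \<in> os_pos Y le' \<sigma>'" and lt: "os_lt le' e f"
  have "g e \<noteq> g f" using lt psi_g by (metis le'_def os_lt_def)
  then show "os_lt le (os_init le \<sigma> {x \<in> E. \<psi> x = e}) (os_init le \<sigma> {x \<in> E. \<psi> x = f})"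
    using pos_init[OF e] pos_init[OF f] lt by (simp add: A_def os_lt_def le'_def)
qed

lemma le'_dom: "le' x y \<Longrightarrow> x \<in> Y \<and> y \<in> Y" by (simp add: le'_def)

end

lemma core_ex:
  assumes "osb_obj E le \<sigma>" "fsb_obj Y \<sigma>'" "fsb_mor E \<sigma> Y \<sigma>' \<psi>"
  shows "\<exists>le'. osb_obj Y le' \<sigma>' \<and> osb_mor E le \<sigma> Y le' \<sigma>' \<psi> \<and> (\<forall>x y. le' x y \<longrightarrow> x \<in> Y \<and> y \<in> Y)"
proof -
  interpret core E le \<sigma> Y \<sigma>' \<psi> using assms by unfold_locales (auto simp: ose_def)
  show ?thesis using obj' mor' le'_dom by blast
qed

theorem lemmaF:
  fixes X :: "'a set" and \<tau> :: "'a \<Rightarrow> 'a"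
  assumes "fsb_obj X \<tau>"
  shows "\<exists>(Ys :: (nat set \<times> (nat \<Rightarrow> nat \<Rightarrow> bool) \<times> (nat \<Rightarrow> nat)) list)
            (\<phi>s :: (nat \<Rightarrow> 'a) list).
     length \<phi>s = length Ys
     \<and> (\<forall>i<length Ys. case Ys ! i of (E, le, \<sigma>) \<Rightarrow>
           osb_obj E le \<sigma> \<and> fsb_mor E \<sigma> X \<tau> (\<phi>s ! i))
     \<and> (\<forall>(E :: nat set) le \<sigma> (\<phi> :: nat \<Rightarrow> 'a).
           osb_obj E le \<sigma> \<and> fsb_mor E \<sigma> X \<tau> \<phi> \<longrightarrow>
           (\<exists>i<length Ys. case Ys ! i of (E', le', \<sigma>') \<Rightarrow>
              (\<exists>\<psi>. osb_mor E le \<sigma> E' le' \<sigma>' \<psi> \<and> (\<forall>e\<in>E. \<phi> e = (\<phi>s ! i) (\<psi> e)))))"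
proof -
  have finX: "finite X" and tin: "\<And>x. x \<in> X \<Longrightarrow> \<tau> x \<in> X" and tinv: "\<And>x. x \<in> X \<Longrightarrow> \<tau> (\<tau> x) = x"
    and ex1: "\<exists>!z. z \<in> X \<and> \<tau> z = z"
    using assms by (auto simp: fsb_obj_def)
  obtain enc :: "'a \<Rightarrow> nat" and n where "enc ` X = {i. i < n}" and inj: "inj_on enc X"
    using finite_imp_inj_to_nat_seg[OF finX] by blast
  define h where "h = the_inv_into X enc"
  have hen: "\<And>x. x \<in> X \<Longrightarrow> h (enc x) = x" unfolding h_def using the_inv_into_f_f[OF inj] by blast
  define Y where "Y = enc ` X"
  define s where "s = (\<lambda>y. enc (\<tau> (h y)))"
  have Yobj: "fsb_obj Y s"
    unfolding fsb_obj_def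
  proof (intro conjI ballI)
    show "finite Y" using finX Y_def by simp
    fix e assume "e \<in> Y"
    then obtain x where x: "x \<in> X" "e = enc x" using Y_def by blast
    show "s e \<in> Y" using x tin hen by (simp add: s_def Y_def)
    show "s (s e) = e" using x tin tinv hen by (simp add: s_def)
  next
    obtain z0 where z0: "z0 \<in> X" "\<tau> z0 = z0" and u: "\<And>w. w \<in> X \<Longrightarrow> \<tau> w = w \<Longrightarrow> w = z0" using ex1 by blast
    show "\<exists>!z. z \<in> Y \<and> s z = z"
    proof
      show "enc z0 \<in> Y \<and> s (enc z0) = enc z0" using z0 hen by (simp add: Y_def s_def)
      fix y assume y: "y \<in> Y \<and> s y = y"
      then obtain x where x: "x \<in> X" "y = enc x" using Y_def by blast
      then have "enc (\<tau> x) = enc x" using y hen by (simp add: s_def)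
      then have "\<tau> x = x" using inj tin x by (meson inj_on_eq_iff)
      then show "y = enc z0" using u x by simp
    qed
  qed
  have hmor: "fsb_mor Y s X \<tau> h"
    unfolding fsb_mor_def
  proof (intro conjI ballI)
    show "h ` Y = X" using hen by (force simp: Y_def image_image)
    fix e assume "e \<in> Y"
    then obtain x where x: "x \<in> X" "e = enc x" using Y_def by blast
    then show "h (s e) = \<tau> (h e)" using hen tin by (simp add: s_def)
  qed
  define S where "S = (\<lambda>R. (Y, (\<lambda>x y. (x, y) \<in> R), s)) ` {R. R \<subseteq> Y \<times> Y \<and> osb_obj Y (\<lambda>x y. (x, y) \<in> R) s}"
  have "finite S" unfolding S_def
    by (rule finite_imageI, rule finite_subset[of _ "Pow (Y \<times> Y)"]) (use finX Y_def in auto)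
  then obtain Ys where Ys: "set Ys = S" using finite_list by blast
  define \<phi>s where "\<phi>s = replicate (length Ys) h"
  show ?thesis
  proof (intro exI[of _ Ys] exI[of _ \<phi>s] conjI allI impI)
    show "length \<phi>s = length Ys" by (simp add: \<phi>s_def)
    fix i assume i: "i < length Ys"
    then have "Ys ! i \<in> S" using Ys nth_mem by blast
    then show "case Ys ! i of (E, le, \<sigma>) \<Rightarrow> osb_obj E le \<sigma> \<and> fsb_mor E \<sigma> X \<tau> (\<phi>s ! i)"
      using hmor i by (auto simp: S_def \<phi>s_def)
  next
    fix E :: "nat set" and le \<sigma> and \<phi> :: "nat \<Rightarrow> 'a"
    assume a: "osb_obj E le \<sigma> \<and> fsb_mor E \<sigma> X \<tau> \<phi>"
    define \<psi> where "\<psi> = enc \<circ> \<phi>"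
    have phiX: "\<And>e. e \<in> E \<Longrightarrow> \<phi> e \<in> X" using a by (auto simp: fsb_mor_def)
    have pmor: "fsb_mor E \<sigma> Y s \<psi>"
      unfolding fsb_mor_def
    proof (intro conjI ballI)
      have "\<phi> ` E = X" using a by (simp add: fsb_mor_def)
      then show "\<psi> ` E = Y" by (simp add: \<psi>_def Y_def image_image flip: \<open>\<phi> ` E = X\<close>)
      fix e assume "e \<in> E"
      then show "\<psi> (\<sigma> e) = s (\<psi> e)" using a phiX hen by (simp add: fsb_mor_def \<psi>_def s_def)
    qed
    obtain le' where l: "osb_obj Y le' s" "osb_mor E le \<sigma> Y le' s \<psi>" "\<forall>x y. le' x y \<longrightarrow> x \<in> Y \<and> y \<in> Y"
      using core_ex[OF conjunct1[OF a] Yobj pmor] by blast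
    define R where "R = {(x, y). le' x y}"
    have leR: "(\<lambda>x y. (x, y) \<in> R) = le'" by (simp add: R_def)
    have "(Y, le', s) \<in> S" unfolding S_def
      using l leR by (intro image_eqI[of _ _ R]) (auto simp: R_def)
    then obtain i where i: "i < length Ys" "Ys ! i = (Y, le', s)" using Ys by (metis in_set_conv_nth)
    show "\<exists>i<length Ys. case Ys ! i of (E', le', \<sigma>') \<Rightarrow>
              (\<exists>\<psi>. osb_mor E le \<sigma> E' le' \<sigma>' \<psi> \<and> (\<forall>e\<in>E. \<phi> e = (\<phi>s ! i) (\<psi> e)))"
      using i l(2) phiX hen by (intro exI[of _ i]) (auto simp: \<phi>s_def \<psi>_def intro!: exI[of _ \<psi>])
  qed
qed

end
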